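(* Let $a<b$, $c<d$, and let $f:[a,b]\times[c,d]\to\mathbb{R}$ be convex on the coordinates. Let $n\in\mathbb{N}$ and set $x_k=a+k\frac{b-a}{n}$ and $y_k=c+k\frac{d-c}{n}$ for $k=0,1,\dots,n$. Then \begin{align*} &\frac{d-c}{2n}\sum_{k=1}^{n}\int_a^b f\Big(x, \frac{y_{k-1}+y_k}{2}\Big)dx + \frac{b-a}{2n}\sum_{k=1}^{n}\int_c^d f\Big(\frac{x_{k-1}+x_k}{2}, y\Big)dy\\ &\leq \int_a^b\int_c^d f(x, y)\,dx\,dy\\ &\leq \frac{d-c}{4n}\int_a^b \left[f(x, c) + f(x, d)\right] dx + \frac{b-a}{4n}\int_c^d \left[f(a, y) + f(b, y)\right] dy\\ &\quad+ \frac{d-c}{2n}\sum_{k=1}^{n-1}\int_a^b f(x, y_k)\,dx + \frac{b-a}{2n}\sum_{k=1}^{n-1}\int_c^d f(x_k, y)\,dy. \end{align*}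
   Context: A function $f:[a,b]\times[c,d]\to\mathbb{R}$ is called convex on the coordinates if for every $y\in[c,d]$ the partial map $u\mapsto f(u,y)$ is convex on $[a,b]$, and for every $x\in[a,b]$ the partial map $v\mapsto f(x,v)$ is convex on $[c,d]$. Empty sums (e.g. $\sum_{k=1}^{0}$) are zero. *)

theory Defs
  imports "HOL-Analysis.Analysis"
begin

definition convex_on_coordinates ::
  "real \<Rightarrow> real \<Rightarrow> real \<Rightarrow> real \<Rightarrow> (real \<Rightarrow> real \<Rightarrow> real) \<Rightarrow> bool" where
  "convex_on_coordinates a b c d f \<longleftrightarrow>
     (\<forall>y\<in>{c..d}. convex_on {a..b} (\<lambda>u. f u y)) \<and>
     (\<forall>x\<in>{a..b}. convex_on {c..d} (\<lambda>v. f x v))"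

end

theory Submission imports Defs "HOL-Analysis.Analysis" begin

lemma convex_mid_reflect:
  fixes \<phi> :: "real \<Rightarrow> real"
  assumes cv: "convex_on {p..q} \<phi>" and x: "x \<in> {p..q}"
  shows "2 * \<phi> ((p+q)/2) \<le> \<phi> x + \<phi> (p+q-x)"
proof -
  have e: "(1 - 1/2) *\<^sub>R x + (1/2) *\<^sub>R (p+q-x) = (p+q)/2" by (simp add: field_simps)
  have "\<phi> ((p+q)/2) \<le> (1-1/2) * \<phi> x + (1/2) * \<phi> (p+q-x)"
    unfolding e[symmetric] by (rule convex_onD[OF cv]) (use x in auto)
  then show ?thesis by simp
qed

lemma convex_integrable:
  fixes \<phi> :: "real \<Rightarrow> real"
  assumes cv: "convex_on {p..q} \<phi>" and pq: "p < q"
  shows "\<phi> integrable_on {p..q}"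
proof -
  define M where "M = max (\<phi> p) (\<phi> q)"
  define K where "K = \<bar>M\<bar> + 2 * \<bar>\<phi> ((p+q)/2)\<bar> + \<bar>M\<bar>"
  have up: "\<phi> x \<le> M" if "x \<in> {p..q}" for x
    using convex_on_le_max[OF cv that] M_def by simp
  have bd: "\<bar>\<phi> x\<bar> \<le> K" if x: "x \<in> {p..q}" for x
  proof -
    have "p+q-x \<in> {p..q}" using x by auto
    then have "\<phi> (p+q-x) \<le> M" by (rule up)
    moreover have "2 * \<phi> ((p+q)/2) \<le> \<phi> x + \<phi> (p+q-x)" by (rule convex_mid_reflect[OF cv x])
    moreover have "\<phi> x \<le> M" using up x .
    ultimately show ?thesis unfolding K_def by linarith
  qed
  have "continuous_on {p<..<q} \<phi>"
    by (rule convex_on_continuous) (auto intro: convex_on_subset[OF cv])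
  then have meas: "\<phi> \<in> borel_measurable (lebesgue_on {p<..<q})"
    by (rule continuous_imp_measurable_on_sets_lebesgue) simp
  have "\<phi> integrable_on {p<..<q}"
    by (rule measurable_bounded_by_integrable_imp_integrable_real[OF meas, of "\<lambda>_. K"])
       (use bd in \<open>auto simp: integrable_on_open_interval_real\<close>)
  then show ?thesis by (simp add: integrable_on_open_interval_real)
qed

lemma HH:
  fixes \<phi> :: "real \<Rightarrow> real"
  assumes cv: "convex_on {p..q} \<phi>" and pq: "p < q"
  shows "(q-p) * \<phi> ((p+q)/2) \<le> integral {p..q} \<phi>"
    and "integral {p..q} \<phi> \<le> (q-p) * (\<phi> p + \<phi> q) / 2"
proof -
  have int: "\<phi> integrable_on {p..q}" by (rule convex_integrable[OF cv pq])
  have h1: "((\<phi> \<circ> (+) (p+q)) has_integral integral {p..q} \<phi>) {-q..-p}"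
    using has_integral_shift_Icc_real[of \<phi> "p+q" "integral {p..q} \<phi>" "-q" "-p"] int
    by (simp add: integrable_integral)
  have h2: "((\<lambda>x. \<phi> (p+q-x)) has_integral integral {p..q} \<phi>) {p..q}"
    using has_integral_reflect_real[of "\<lambda>x. \<phi> (p+q+x)" "integral {p..q} \<phi>" "-p" "-q"] h1
    by (simp add: o_def)
  have h3: "((\<lambda>x. \<phi> x + \<phi> (p+q-x)) has_integral 2 * integral {p..q} \<phi>) {p..q}"
    using has_integral_add[OF integrable_integral[OF int] h2] by simp
  have h4: "((\<lambda>x. 2 * \<phi> ((p+q)/2)) has_integral (q-p) * (2 * \<phi> ((p+q)/2))) {p..q}"
    using has_integral_const_real[of "2 * \<phi> ((p+q)/2)" p q] pq by simp
  have "(q-p) * (2 * \<phi> ((p+q)/2)) \<le> 2 * integral {p..q} \<phi>"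
    by (rule has_integral_le[OF h4 h3]) (rule convex_mid_reflect[OF cv], simp)
  then show "(q-p) * \<phi> ((p+q)/2) \<le> integral {p..q} \<phi>" by simp
  define sl where "sl = (\<phi> q - \<phi> p) / (q - p)"
  have ch: "\<phi> x \<le> sl * (x - p) + \<phi> p" if "x \<in> {p..q}" for x
    using convex_onD_Icc'[OF cv that] by (simp add: sl_def)
  have h5: "((\<lambda>x. sl * (x - p) + \<phi> p) has_integral (q-p) * (\<phi> p + \<phi> q) / 2) {p..q}"
  proof -
    have "((\<lambda>x. sl * (x - p) + \<phi> p) has_integral
       ((\<lambda>x. sl * (x-p)^2/2 + \<phi> p * (x - p)) q - (\<lambda>x. sl * (x-p)^2/2 + \<phi> p * (x - p)) p)) {p..q}"
      by (rule fundamental_theorem_of_calculus) (use pq in \<open>auto intro!: derivative_eq_intros simp: has_real_derivative_iff_has_vector_derivative[symmetric] field_simps power2_eq_square\<close>)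
    moreover have "(\<lambda>x. sl * (x-p)^2/2 + \<phi> p * (x - p)) q - (\<lambda>x. sl * (x-p)^2/2 + \<phi> p * (x - p)) p
       = (q-p) * (\<phi> p + \<phi> q) / 2"
      using pq by (simp add: sl_def field_simps power2_eq_square)
    ultimately show ?thesis by (metis (no_types, lifting))
  qed
  show "integral {p..q} \<phi> \<le> (q-p) * (\<phi> p + \<phi> q) / 2"
    by (rule has_integral_le[OF integrable_integral[OF int] h5]) (rule ch)
qed

lemma sum_telescope2:
  fixes g :: "nat \<Rightarrow> real"
  assumes "n \<ge> 1"
  shows "(\<Sum>k=1..n. g (k-1) + g k) = g 0 + g n + 2 * (\<Sum>k=1..n-1. g k)"
  using assms
proof (induction n rule: dec_induct)
  case base then show ?case by simp
next
  case (step m)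
  have "(\<Sum>k=1..Suc m. g (k-1) + g k) = (\<Sum>k=1..m. g (k-1) + g k) + (g m + g (Suc m))" by simp
  also have "\<dots> = g 0 + g m + 2 * (\<Sum>k=1..m-1. g k) + (g m + g (Suc m))" using step by simp
  also have "(\<Sum>k=1..m. g k) = (\<Sum>k=1..m-1. g k) + g m"
    using step(1) by (cases m) auto
  ultimately show ?case by simp
qed

lemma integral_partition:
  fixes \<phi> :: "real \<Rightarrow> real"
  assumes h: "h \<ge> 0" and int: "\<phi> integrable_on {p..p + real m * h}"
  shows "integral {p..p + real m * h} \<phi> = (\<Sum>k=1..m. integral {p + real (k-1) * h..p + real k * h} \<phi>)"
  using int
proof (induction m)
  case 0 then show ?case by simp
next
  case (Suc m)
  have sub: "{p..p + real m * h} \<subseteq> {p..p + real (Suc m) * h}" using h by (auto simp: algebra_simps)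
  have "\<phi> integrable_on {p..p + real m * h}" by (rule integrable_subinterval_real[OF Suc.prems sub])
  then have IH: "integral {p..p + real m * h} \<phi> = (\<Sum>k=1..m. integral {p + real (k-1) * h..p + real k * h} \<phi>)"
    by (rule Suc.IH)
  have "integral {p..p + real m * h} \<phi> + integral {p + real m * h..p + real (Suc m) * h} \<phi>
      = integral {p..p + real (Suc m) * h} \<phi>"
    by (rule Henstock_Kurzweil_Integration.integral_combine[OF _ _ Suc.prems]) (use h in \<open>auto simp: algebra_simps\<close>)
  then show ?case using IH by simp
qed

lemma HH_partition:
  fixes \<phi> :: "real \<Rightarrow> real"
  assumes cv: "convex_on {p..q} \<phi>" and pq: "p < q" and n: "n \<ge> 1"
  defines "t \<equiv> (\<lambda>k::nat. p + real k * (q - p) / real n)"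
  shows "(q-p)/real n * (\<Sum>k=1..n. \<phi> ((t (k-1) + t k)/2)) \<le> integral {p..q} \<phi>"
    and "integral {p..q} \<phi> \<le> (q-p)/(2 * real n) * (\<phi> p + \<phi> q) + (q-p)/real n * (\<Sum>k=1..n-1. \<phi> (t k))"
proof -
  define h where "h = (q-p)/real n"
  have hpos: "h > 0" using pq n by (simp add: h_def)
  have t: "t k = p + real k * h" for k by (simp add: t_def h_def)
  have tn: "t n = q" using n by (simp add: t_def)
  have t0: "t 0 = p" by (simp add: t_def)
  have tin: "t k \<in> {p..q}" if "k \<le> n" for k
  proof -
    have "real k * h \<le> real n * h" using that hpos by (simp add: mult_right_mono)
    also have "real n * h = q - p" using n by (simp add: h_def)
    finally show ?thesis using hpos by (simp add: t)
  qed
  have step: "t k - t (k-1) = h" if "k \<ge> 1" for k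
    using that by (simp add: t of_nat_diff algebra_simps)
  have int: "\<phi> integrable_on {p..q}" by (rule convex_integrable[OF cv pq])
  have part: "integral {p..q} \<phi> = (\<Sum>k=1..n. integral {t (k-1)..t k} \<phi>)"
  proof -
    have "q = p + real n * h" using n by (simp add: h_def)
    then show ?thesis using integral_partition[of h \<phi> p n] int hpos by (simp add: t)
  qed
  have piece: "h * \<phi> ((t (k-1) + t k)/2) \<le> integral {t (k-1)..t k} \<phi> \<and>
      integral {t (k-1)..t k} \<phi> \<le> h * (\<phi> (t (k-1)) + \<phi> (t k)) / 2"
    if k: "k \<in> {1..n}" for k
  proof -
    have lt: "t (k-1) < t k" using step[of k] k hpos by auto
    have "{t (k-1)..t k} \<subseteq> {p..q}" using tin[of k] tin[of "k-1"] k by auto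
    then have cvk: "convex_on {t (k-1)..t k} \<phi>" by (rule convex_on_subset[OF cv]) simp
    show ?thesis using HH[OF cvk lt] step[of k] k by simp
  qed
  have "(q-p)/real n * (\<Sum>k=1..n. \<phi> ((t (k-1) + t k)/2)) = (\<Sum>k=1..n. h * \<phi> ((t (k-1) + t k)/2))"
    by (simp add: h_def sum_distrib_left)
  also have "\<dots> \<le> (\<Sum>k=1..n. integral {t (k-1)..t k} \<phi>)"
    by (rule sum_mono) (use piece in blast)
  finally show "(q-p)/real n * (\<Sum>k=1..n. \<phi> ((t (k-1) + t k)/2)) \<le> integral {p..q} \<phi>"
    using part by simp
  have "integral {p..q} \<phi> \<le> (\<Sum>k=1..n. h * (\<phi> (t (k-1)) + \<phi> (t k)) / 2)"
    unfolding part by (rule sum_mono) (use piece in blast)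
  also have "\<dots> = h / 2 * (\<Sum>k=1..n. \<phi> (t (k-1)) + \<phi> (t k))"
    by (simp add: sum_distrib_left sum_divide_distrib)
  also have "\<dots> = h / 2 * (\<phi> (t 0) + \<phi> (t n) + 2 * (\<Sum>k=1..n-1. \<phi> (t k)))"
    using sum_telescope2[OF n, of "\<lambda>k. \<phi> (t k)"] by simp
  also have "\<dots> = (q-p)/(2 * real n) * (\<phi> p + \<phi> q) + (q-p)/real n * (\<Sum>k=1..n-1. \<phi> (t k))"
  proof -
    have "real n > 0" using n by simp
    then show ?thesis by (simp add: t0 tn h_def field_simps)
  qed
  finally show "integral {p..q} \<phi> \<le> (q-p)/(2 * real n) * (\<phi> p + \<phi> q) + (q-p)/real n * (\<Sum>k=1..n-1. \<phi> (t k))" .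
qed


theorem theorem3:
  fixes a b c d :: real and f :: "real \<Rightarrow> real \<Rightarrow> real" and n :: nat
  assumes "a < b" and "c < d"
    and "convex_on_coordinates a b c d f"
    and "n \<ge> 1"
  defines "xk \<equiv> (\<lambda>k::nat. a + real k * (b - a) / real n)"
    and "yk \<equiv> (\<lambda>k::nat. c + real k * (d - c) / real n)"
  shows
    "((d - c) / (2 * real n) * (\<Sum>k=1..n. integral {a..b} (\<lambda>x. f x ((yk (k - 1) + yk k) / 2)))
     + (b - a) / (2 * real n) * (\<Sum>k=1..n. integral {c..d} (\<lambda>y. f ((xk (k - 1) + xk k) / 2) y))
     \<le> integral {a..b} (\<lambda>x. integral {c..d} (\<lambda>y. f x y))
   \<and> integral {a..b} (\<lambda>x. integral {c..d} (\<lambda>y. f x y))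
     \<le> (d - c) / (4 * real n) * integral {a..b} (\<lambda>x. f x c + f x d)
       + (b - a) / (4 * real n) * integral {c..d} (\<lambda>y. f a y + f b y)
       + (d - c) / (2 * real n) * (\<Sum>k=1..n-1. integral {a..b} (\<lambda>x. f x (yk k)))
       + (b - a) / (2 * real n) * (\<Sum>k=1..n-1. integral {c..d} (\<lambda>y. f (xk k) y)))"
proof -
  note ab = assms(1) and cd = assms(2) and n = assms(4)
  have cy: "\<And>y. y \<in> {c..d} \<Longrightarrow> convex_on {a..b} (\<lambda>u. f u y)"
   and cx: "\<And>x. x \<in> {a..b} \<Longrightarrow> convex_on {c..d} (\<lambda>v. f x v)"
    using assms(3) unfolding convex_on_coordinates_def by auto
  have nz: "real n > 0" using n by simp
  define g where "g = (\<lambda>x. integral {c..d} (\<lambda>y. f x y))"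
  have iy: "(\<lambda>u. f u y) integrable_on {a..b}" if "y \<in> {c..d}" for y
    by (rule convex_integrable[OF cy[OF that] ab])
  have ix: "(\<lambda>v. f x v) integrable_on {c..d}" if "x \<in> {a..b}" for x
    by (rule convex_integrable[OF cx[OF that] cd])
  have gcv: "convex_on {a..b} g"
    unfolding convex_on_def
  proof (intro conjI ballI allI impI)
    show "convex {a..b}" by simp
    fix x1 x2 u v :: real
    assume x1: "x1 \<in> {a..b}" and x2: "x2 \<in> {a..b}" and u0: "0 \<le> u" and v0: "0 \<le> v" and uv1: "u + v = 1"
    have z: "u *\<^sub>R x1 + v *\<^sub>R x2 \<in> {a..b}"
      using convexD[of "{a..b}" x1 x2 u v] x1 x2 u0 v0 uv1 by simp
    have "g (u *\<^sub>R x1 + v *\<^sub>R x2) \<le> integral {c..d} (\<lambda>y. u * f x1 y + v * f x2 y)"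
      unfolding g_def
    proof (rule integral_le)
      show "(\<lambda>y. f (u *\<^sub>R x1 + v *\<^sub>R x2) y) integrable_on {c..d}" by (rule ix[OF z])
      show "(\<lambda>y. u * f x1 y + v * f x2 y) integrable_on {c..d}"
        by (intro integrable_add integrable_on_mult_right ix x1 x2)
      fix y assume y: "y \<in> {c..d}"
      show "f (u *\<^sub>R x1 + v *\<^sub>R x2) y \<le> u * f x1 y + v * f x2 y"
        using cy[OF y] x1 x2 u0 v0 uv1 unfolding convex_on_def by blast
    qed
    also have "\<dots> = u * g x1 + v * g x2"
      unfolding g_def
      using integral_add[OF integrable_on_mult_right[OF ix[OF x1], of u] integrable_on_mult_right[OF ix[OF x2], of v]]
      by simp
    finally show "g (u *\<^sub>R x1 + v *\<^sub>R x2) \<le> u * g x1 + v * g x2" .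
  qed
  have gi: "g integrable_on {a..b}" by (rule convex_integrable[OF gcv ab])
  have ykin: "yk k \<in> {c..d}" if "k \<le> n" for k
  proof -
    have "real k * (d - c) / real n \<le> d - c"
      using that nz cd by (simp add: divide_le_eq mult_right_mono)
    moreover have "0 \<le> real k * (d - c) / real n" using cd nz by simp
    ultimately show ?thesis by (simp add: yk_def)
  qed
  have xkin: "xk k \<in> {a..b}" if "k \<le> n" for k
  proof -
    have "real k * (b - a) / real n \<le> b - a"
      using that nz ab by (simp add: divide_le_eq mult_right_mono)
    moreover have "0 \<le> real k * (b - a) / real n" using ab nz by simp
    ultimately show ?thesis by (simp add: xk_def)
  qed
  have myin: "(yk (k-1) + yk k)/2 \<in> {c..d}" if "k \<in> {1..n}" for k
  proof -
    have "k - 1 \<le> n" "k \<le> n" using that by auto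
    then show ?thesis using ykin[of k] ykin[of "k-1"] by auto
  qed
  have mxin: "(xk (k-1) + xk k)/2 \<in> {a..b}" if "k \<in> {1..n}" for k
  proof -
    have "k - 1 \<le> n" "k \<le> n" using that by auto
    then show ?thesis using xkin[of k] xkin[of "k-1"] by auto
  qed
  define I where "I = integral {a..b} g"
  define SA where "SA = (\<Sum>k=1..n. integral {a..b} (\<lambda>x. f x ((yk (k - 1) + yk k) / 2)))"
  have A: "(d-c)/real n * SA \<le> I"
  proof -
    have pt: "(d-c)/real n * (\<Sum>k=1..n. f x ((yk (k - 1) + yk k) / 2)) \<le> g x" if x: "x \<in> {a..b}" for x
      using HH_partition(1)[OF cx[OF x] cd n] unfolding g_def yk_def by simp
    have ints: "(\<lambda>x. (\<Sum>k=1..n. f x ((yk (k - 1) + yk k) / 2))) integrable_on {a..b}"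
      by (rule integrable_sum) (use iy myin in auto)
    have "integral {a..b} (\<lambda>x. (d-c)/real n * (\<Sum>k=1..n. f x ((yk (k - 1) + yk k) / 2))) \<le> I"
      unfolding I_def by (rule integral_le[OF integrable_on_mult_right[OF ints] gi pt])
    moreover have "integral {a..b} (\<lambda>x. (d-c)/real n * (\<Sum>k=1..n. f x ((yk (k - 1) + yk k) / 2)))
        = (d-c)/real n * SA"
      unfolding SA_def by (subst integral_mult_right, subst integral_sum) (use iy myin in auto)
    ultimately show ?thesis by linarith
  qed
  define SB where "SB = (\<Sum>k=1..n. integral {c..d} (\<lambda>y. f ((xk (k - 1) + xk k) / 2) y))"
  have B: "(b-a)/real n * SB \<le> I"
    using HH_partition(1)[OF gcv ab n] unfolding SB_def I_def g_def xk_def by simp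
  define SC where "SC = (\<Sum>k=1..n-1. integral {a..b} (\<lambda>x. f x (yk k)))"
  define EC where "EC = integral {a..b} (\<lambda>x. f x c + f x d)"
  have C: "I \<le> (d-c)/(2*real n) * EC + (d-c)/real n * SC"
  proof -
    have pt: "g x \<le> (d-c)/(2*real n) * (f x c + f x d) + (d-c)/real n * (\<Sum>k=1..n-1. f x (yk k))"
      if x: "x \<in> {a..b}" for x
      using HH_partition(2)[OF cx[OF x] cd n] unfolding g_def yk_def by simp
    have ykin': "yk k \<in> {c..d}" if "k \<in> {1..n-1}" for k using ykin[of k] that by auto
    have ic: "(\<lambda>x. f x c + f x d) integrable_on {a..b}"
      by (rule integrable_add) (use iy cd in auto)
    have ints: "(\<lambda>x. (\<Sum>k=1..n-1. f x (yk k))) integrable_on {a..b}"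
      by (rule integrable_sum) (use iy ykin' in auto)
    have "I \<le> integral {a..b} (\<lambda>x. (d-c)/(2*real n) * (f x c + f x d) + (d-c)/real n * (\<Sum>k=1..n-1. f x (yk k)))"
      unfolding I_def
      by (rule integral_le[OF gi integrable_add[OF integrable_on_mult_right[OF ic] integrable_on_mult_right[OF ints]] pt])
    also have "\<dots> = (d-c)/(2*real n) * EC + (d-c)/real n * SC"
      unfolding EC_def SC_def
      by (subst integral_add, (intro integrable_on_mult_right ic ints)+, subst integral_mult_right,
          subst integral_mult_right, subst integral_sum) (use iy ykin' in auto)
    finally show ?thesis .
  qed
  define SD where "SD = (\<Sum>k=1..n-1. integral {c..d} (\<lambda>y. f (xk k) y))"
  define ED where "ED = integral {c..d} (\<lambda>y. f a y + f b y)"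
  have D: "I \<le> (b-a)/(2*real n) * ED + (b-a)/real n * SD"
  proof -
    have "ED = g a + g b" unfolding ED_def g_def
      by (rule integral_add) (use ix ab in auto)
    then show ?thesis
      using HH_partition(2)[OF gcv ab n] unfolding SD_def I_def xk_def by (simp add: g_def)
  qed
  have e1: "(d - c) / (2 * real n) * SA = ((d-c)/real n * SA) / 2" by simp
  have e2: "(b - a) / (2 * real n) * SB = ((b-a)/real n * SB) / 2" by simp
  have e3: "(d - c) / (4 * real n) * EC = ((d-c)/(2*real n) * EC) / 2" by simp
  have e4: "(b - a) / (4 * real n) * ED = ((b-a)/(2*real n) * ED) / 2" by simp
  have e5: "(d - c) / (2 * real n) * SC = ((d-c)/real n * SC) / 2" by simp
  have e6: "(b - a) / (2 * real n) * SD = ((b-a)/real n * SD) / 2" by simp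
  have "I = integral {a..b} (\<lambda>x. integral {c..d} (\<lambda>y. f x y))" by (simp add: I_def g_def)
  then show ?thesis
    using A B C D e1 e2 e3 e4 e5 e6 unfolding SA_def SB_def SC_def SD_def EC_def ED_def by linarith
qed

end
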